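(* For an integer $n\geq 0$ and $z\in\mathbb{C}$, let $$\mathcal{T}_n(z) := \sum_{m=0}^n \binom{n}{m} m^m\,(n-m+z)^{n-m}$$ (with $0^0\equiv 1$), and let $\Gamma(a,x)=\int_x^\infty t^{a-1}e^{-t}\,dt$ denote the (upper) incomplete Gamma function, $\mathrm{Re}(a)>0$. Then $$\mathcal{T}_n(z) = e^{z+n}\, \Gamma(n+1,z+n).$$
   Context: Convention: $0^0\equiv1$. For $a=n+1$ with $n$ a nonnegative integer, the integrand $t^{n}e^{-t}$ is entire, so $\Gamma(n+1,x)=\int_x^\infty t^{n}e^{-t}\,dt$ is well defined for complex $x$ by integrating along any path from $x$ to $+\infty$ (e.g. a horizontal ray to the right). *)

theory Defs
  imports "HOL-Analysis.Analysis"
begin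

text \<open>T_n(z) = sum_{m=0}^n binom(n,m) m^m (n-m+z)^(n-m); note that 0^0 = 1 holds for ^ in Isabelle.\<close>
definition T_poly :: "nat \<Rightarrow> complex \<Rightarrow> complex" where
  "T_poly n z = (\<Sum>m=0..n. of_nat (n choose m) * (of_nat m) ^ m * (of_nat (n - m) + z) ^ (n - m))"

text \<open>Upper incomplete Gamma function Gamma(n+1, x) for a nonnegative integer n and complex x,
  integrating t^n e^(-t) along the horizontal ray from x to +infinity: t = x + s, s in [0, infinity).\<close>
definition inc_Gamma_nat :: "nat \<Rightarrow> complex \<Rightarrow> complex" where
  "inc_Gamma_nat n x = integral {0..} (\<lambda>s::real. (x + of_real s) ^ n * exp (- (x + of_real s)))"

end

theory Submission
  imports Defs
begin


lemma gamma_nat_int: "((\<lambda>s::real. s ^ j * exp (- s)) has_integral fact j) {0..}"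
proof -
  have "((\<lambda>t. t powr (real (Suc j) - 1) / exp t) has_integral Gamma (real (Suc j))) {0..}"
    by (rule Gamma_integral_real) simp
  moreover have "Gamma (real (Suc j)) = fact j"
    using Gamma_fact[of j] by (simp add: add.commute)
  ultimately have h: "((\<lambda>t. t powr (real j) / exp t) has_integral fact j) {0..}" by simp
  show ?thesis
    apply (subst has_integral_spike_eq[where S="{0}"])
    using h by (auto simp: powr_realpow exp_minus field_simps)
qed

definition S :: "nat \<Rightarrow> complex \<Rightarrow> complex" where
  "S n w = (\<Sum>k\<le>n. fact n / fact k * w ^ k)"

lemma inc_Gamma_S: "inc_Gamma_nat n x = exp (- x) * S n x"
proof -
  have eq: "(x + of_real s) ^ n * exp (- (x + of_real s)) =
     (\<Sum>k\<le>n. (exp (-x) * of_nat (n choose k) * x ^ k) * of_real (s ^ (n - k) * exp (- s)))" for s :: real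
  proof -
    have "exp (- (x + of_real s)) = exp (-x) * exp (- of_real s)"
      by (simp add: exp_add[symmetric])
    then show ?thesis
      by (simp add: binomial_ring[of x] sum_distrib_left sum_distrib_right exp_of_real[symmetric] mult_ac)
  qed
  have "((\<lambda>s::real. \<Sum>k\<le>n. (exp (-x) * of_nat (n choose k) * x ^ k) * of_real (s ^ (n - k) * exp (- s)))
      has_integral (\<Sum>k\<le>n. (exp (-x) * of_nat (n choose k) * x ^ k) * of_real (fact (n - k)))) {0..}"
    by (intro has_integral_sum has_integral_mult_right has_integral_of_real gamma_nat_int) auto
  then have "integral {0..} (\<lambda>s::real. (x + of_real s) ^ n * exp (- (x + of_real s))) =
     (\<Sum>k\<le>n. (exp (-x) * of_nat (n choose k) * x ^ k) * of_real (fact (n - k)))"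
    unfolding eq by (rule integral_unique)
  also have "\<dots> = exp (- x) * S n x"
    unfolding S_def sum_distrib_left
  proof (rule sum.cong)
    fix k assume "k \<in> {..n}"
    then have "of_nat (n choose k) * (fact (n - k) :: complex) = fact n / fact k"
      by (simp add: binomial_fact field_simps)
    then show "exp (- x) * of_nat (n choose k) * x ^ k * of_real (fact (n - k)) = exp (- x) * (fact n / fact k * x ^ k)"
      by (metis (no_types, lifting) mult.assoc mult.commute of_real_fact)
  qed simp
  finally show ?thesis unfolding inc_Gamma_nat_def .
qed


definition E :: "nat \<Rightarrow> (nat \<Rightarrow> complex) \<Rightarrow> complex" where
  "E n f = (\<Sum>m\<le>n. (-1) ^ m * of_nat (n choose m) * f m)"

lemma E_aux: "(\<Sum>k\<le>n. (-1) ^ k * of_nat (n choose Suc k) * f (Suc k)) = f 0 - E n f"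
proof (cases n)
  case 0 then show ?thesis by (simp add: E_def)
next
  case (Suc n')
  have "E n f = f 0 + (\<Sum>k\<le>n'. (-1) ^ Suc k * of_nat (Suc n' choose Suc k) * f (Suc k))"
    unfolding E_def Suc by (subst sum.atMost_Suc_shift) simp
  moreover have "(\<Sum>k\<le>n. (-1) ^ k * of_nat (n choose Suc k) * f (Suc k)) =
     (\<Sum>k\<le>n'. (-1) ^ k * of_nat (Suc n' choose Suc k) * f (Suc k))"
    unfolding Suc by (simp add: binomial_eq_0)
  ultimately show ?thesis by (simp add: sum_negf[symmetric])
qed

lemma E_Suc: "E (Suc n) f = E n f - E n (\<lambda>m. f (Suc m))"
proof -
  have "E (Suc n) f = f 0 + (\<Sum>k\<le>n. (-1) ^ Suc k * of_nat (Suc n choose Suc k) * f (Suc k))"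
    unfolding E_def by (subst sum.atMost_Suc_shift) simp
  also have "(\<Sum>k\<le>n. (-1) ^ Suc k * of_nat (Suc n choose Suc k) * f (Suc k)) =
     (\<Sum>k\<le>n. - ((-1) ^ k * of_nat (n choose k) * f (Suc k)) - (-1) ^ k * of_nat (n choose Suc k) * f (Suc k))"
    by (rule sum.cong) (simp_all add: algebra_simps)
  also have "\<dots> = - E n (\<lambda>m. f (Suc m)) - (f 0 - E n f)"
    by (simp only: sum_subtractf sum_negf E_aux) (simp add: E_def)
  finally show ?thesis by simp
qed

lemma E_diff: "E n (\<lambda>m. f m - g m) = E n f - E n g"
  unfolding E_def by (simp add: sum_subtractf[symmetric] algebra_simps)

lemma E_lin: "E n (\<lambda>m. \<Sum>i\<in>I. c i * g i m) = (\<Sum>i\<in>I. c i * E n (g i))"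
  unfolding E_def by (simp add: sum_distrib_left sum_distrib_right mult_ac sum.swap[of _ I])

lemma E_pow: "j \<le> n \<Longrightarrow> E n (\<lambda>m. of_nat m ^ j) = (if j = n then (-1) ^ n * fact n else 0)"
proof (induction n arbitrary: j)
  case 0 then show ?case by (simp add: E_def)
next
  case (Suc n)
  have "E (Suc n) (\<lambda>m. of_nat m ^ j) = - E n (\<lambda>m. of_nat (Suc m) ^ j - of_nat m ^ j)"
    by (simp add: E_Suc E_diff)
  also have "(\<lambda>m. of_nat (Suc m) ^ j - (of_nat m ^ j :: complex)) =
     (\<lambda>m. \<Sum>i<j. of_nat (j choose i) * (of_nat m ^ i))"
  proof
    fix m
    have "(of_nat m + 1 :: complex) ^ j = (\<Sum>i\<le>j. of_nat (j choose i) * of_nat m ^ i * 1 ^ (j - i))"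
      by (rule binomial_ring)
    also have "\<dots> = (\<Sum>i<j. of_nat (j choose i) * of_nat m ^ i) + of_nat m ^ j"
      by (simp add: lessThan_Suc_atMost[symmetric])
    finally show "of_nat (Suc m) ^ j - (of_nat m ^ j :: complex) = (\<Sum>i<j. of_nat (j choose i) * of_nat m ^ i)"
      by (simp add: add.commute)
  qed
  also have "E n \<dots> = (\<Sum>i<j. of_nat (j choose i) * E n (\<lambda>m. of_nat m ^ i))"
    by (rule E_lin)
  also have "\<dots> = (\<Sum>i<j. of_nat (j choose i) * (if i = n then (-1) ^ n * fact n else 0))"
    by (rule sum.cong) (use Suc in auto)
  also have "\<dots> = (if j = Suc n then of_nat (Suc n) * (-1) ^ n * fact n else 0)"
  proof (cases "j = Suc n")
    case True
    then show ?thesis by (simp add: sum.delta)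
  next
    case False
    then have "n \<notin> {..<j}" using Suc.prems by auto
    then show ?thesis using False by (simp add: sum.delta)
  qed
  finally show ?case by (simp add: algebra_simps)
qed


lemma T_at: "T_poly n (- of_nat n) = fact n"
proof -
  have "T_poly n (- of_nat n) = (\<Sum>m\<le>n. (-1) ^ n * ((-1) ^ m * of_nat (n choose m) * of_nat m ^ n))"
    unfolding T_poly_def atLeast0AtMost
  proof (rule sum.cong)
    fix m assume "m \<in> {..n}"
    then have mn: "m \<le> n" by simp
    have "(of_nat (n - m) + - of_nat n :: complex) = - of_nat m" using mn by (simp add: of_nat_diff)
    moreover have "(- (of_nat m :: complex)) ^ (n - m) = (-1) ^ (n - m) * of_nat m ^ (n - m)"
      by (rule power_minus)
    moreover have "((-1::complex) ^ n) = (-1) ^ (n - m) * (-1) ^ m"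
      using mn by (simp add: power_add[symmetric])
    moreover have "(of_nat m :: complex) ^ m * of_nat m ^ (n - m) = of_nat m ^ n"
      using mn by (simp add: power_add[symmetric])
    moreover have "((-1::complex) ^ m) * (-1) ^ m = 1"
      by (simp add: power_add[symmetric])
    ultimately show "of_nat (n choose m) * of_nat m ^ m * (of_nat (n - m) + - of_nat n) ^ (n - m) =
         (-1) ^ n * ((-1) ^ m * of_nat (n choose m) * (of_nat m :: complex) ^ n)"
    proof -
      assume a: "(of_nat (n - m) + - of_nat n :: complex) = - of_nat m"
        and b: "(- (of_nat m :: complex)) ^ (n - m) = (-1) ^ (n - m) * of_nat m ^ (n - m)"
        and c: "((-1::complex) ^ n) = (-1) ^ (n - m) * (-1) ^ m"
        and d: "(of_nat m :: complex) ^ m * of_nat m ^ (n - m) = of_nat m ^ n"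
        and e: "((-1::complex) ^ m) * (-1) ^ m = 1"
      have "(-1) ^ n * ((-1) ^ m * of_nat (n choose m) * (of_nat m :: complex) ^ n)
         = (-1) ^ (n - m) * (((-1) ^ m * (-1) ^ m) * of_nat (n choose m) * (of_nat m ^ m * of_nat m ^ (n - m)))"
        unfolding c d by (simp only: mult_ac)
      also have "\<dots> = of_nat (n choose m) * of_nat m ^ m * ((-1) ^ (n - m) * of_nat m ^ (n - m))"
        unfolding e by (simp only: mult_ac mult_1_left mult_1_right)
      finally show ?thesis unfolding a b by (rule sym)
    qed
  qed simp
  also have "\<dots> = (-1) ^ n * E n (\<lambda>m. of_nat m ^ n)"
    unfolding E_def by (simp add: sum_distrib_left)
  also have "\<dots> = fact n" by (simp add: E_pow)
  finally show ?thesis .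
qed

lemma ac1: "(x::complex) * y = u * v \<Longrightarrow> x * w * (y * p) = u * (v * w * p)"
proof -
  assume h: "x * y = u * v"
  have "x * w * (y * p) = (x * y) * (w * p)" by (simp only: mult_ac)
  also have "\<dots> = u * (v * w * p)" unfolding h by (simp only: mult_ac)
  finally show ?thesis .
qed

lemma T_deriv: "((\<lambda>z. T_poly (Suc n) z) has_field_derivative (of_nat (Suc n) * T_poly n (z + 1))) (at z)"
proof -
  let ?c = "\<lambda>m. of_nat (Suc n choose m) * (of_nat m ^ m :: complex)"
  have "((\<lambda>z. \<Sum>m\<in>{0..Suc n}. ?c m * (of_nat (Suc n - m) + z) ^ (Suc n - m)) has_field_derivative
     (\<Sum>m\<in>{0..Suc n}. ?c m * (of_nat (Suc n - m) * (of_nat (Suc n - m) + z) ^ (Suc n - m - 1)))) (at z)"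
    by (intro DERIV_sum) (auto intro!: derivative_eq_intros)
  moreover have "(\<Sum>m\<in>{0..Suc n}. ?c m * (of_nat (Suc n - m) * (of_nat (Suc n - m) + z) ^ (Suc n - m - 1)))
      = of_nat (Suc n) * T_poly n (z + 1)"
  proof -
    have "(\<Sum>m\<in>{0..Suc n}. ?c m * (of_nat (Suc n - m) * (of_nat (Suc n - m) + z) ^ (Suc n - m - 1)))
       = (\<Sum>m\<in>{0..n}. ?c m * (of_nat (Suc n - m) * (of_nat (Suc n - m) + z) ^ (Suc n - m - 1)))"
      by (subst sum.atLeast0_atMost_Suc) simp
    also have "\<dots> = (\<Sum>m\<in>{0..n}. of_nat (Suc n) * (of_nat (n choose m) * of_nat m ^ m * (of_nat (n - m) + (z + 1)) ^ (n - m)))"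
    proof (rule sum.cong)
      fix m assume "m \<in> {0..n}"
      then have mn: "m \<le> n" by simp
      have "(Suc n - m) * (Suc n choose m) = Suc n * (n choose m)"
        using binomial_absorb_comp[of "Suc n" m] by simp
      then have h1: "(of_nat (Suc n choose m) :: complex) * of_nat (Suc n - m) = of_nat (Suc n) * of_nat (n choose m)"
        by (metis mult.commute of_nat_mult)
      have h2: "Suc n - m - 1 = n - m" using mn by simp
      have h3: "(of_nat (Suc n - m) + z :: complex) = of_nat (n - m) + (z + 1)"
        using mn by (simp add: of_nat_diff Suc_diff_le)
      show "?c m * (of_nat (Suc n - m) * (of_nat (Suc n - m) + z) ^ (Suc n - m - 1)) =
         of_nat (Suc n) * (of_nat (n choose m) * of_nat m ^ m * (of_nat (n - m) + (z + 1)) ^ (n - m))"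
        unfolding h2 h3 by (rule ac1[OF h1])
    qed simp
    finally show ?thesis unfolding T_poly_def sum_distrib_left .
  qed
  ultimately show ?thesis unfolding T_poly_def by simp
qed

lemma S_deriv: "(S (Suc n) has_field_derivative (of_nat (Suc n) * S n w)) (at w)"
proof -
  have "((\<lambda>w. \<Sum>k\<le>Suc n. fact (Suc n) / fact k * w ^ k) has_field_derivative
     (\<Sum>k\<le>Suc n. fact (Suc n) / fact k * (of_nat k * w ^ (k - 1)))) (at w)"
    by (intro DERIV_sum) (auto intro!: derivative_eq_intros)
  moreover have "(\<Sum>k\<le>Suc n. fact (Suc n) / fact k * (of_nat k * w ^ (k - 1))) = of_nat (Suc n) * S n w"
  proof -
    have "(\<Sum>k\<le>Suc n. fact (Suc n) / fact k * (of_nat k * w ^ (k - 1)))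
       = (\<Sum>k\<le>n. fact (Suc n) / fact (Suc k) * (of_nat (Suc k) * (w ^ k :: complex)))"
      by (subst sum.atMost_Suc_shift) simp
    also have "\<dots> = (\<Sum>k\<le>n. of_nat (Suc n) * (fact n / fact k * w ^ k))"
    proof (rule sum.cong)
      fix k
      have nz: "(of_nat (Suc k) :: complex) \<noteq> 0"
        by (metis of_nat_eq_0_iff nat.distinct(1))
      have "fact (Suc n) / fact (Suc k) * (of_nat (Suc k) * w ^ k) = of_nat (Suc n) * fact n / (of_nat (Suc k) * fact k) * (of_nat (Suc k) * (w ^ k :: complex))"
        by (simp only: fact_Suc of_nat_mult)
      also have "\<dots> = of_nat (Suc n) * (fact n / fact k * (w ^ k :: complex))"
        using nz by (simp add: divide_simps)
      finally show "fact (Suc n) / fact (Suc k) * (of_nat (Suc k) * (w ^ k :: complex)) = of_nat (Suc n) * (fact n / fact k * w ^ k)" .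
    qed simp
    finally show ?thesis unfolding S_def sum_distrib_left .
  qed
  ultimately show ?thesis unfolding S_def[abs_def] by simp
qed

lemma T_S: "T_poly n z = S n (z + of_nat n)"
proof (induction n arbitrary: z)
  case 0 then show ?case by (simp add: T_poly_def S_def)
next
  case (Suc n)
  define G where "G z = T_poly (Suc n) z - S (Suc n) (z + of_nat (Suc n))" for z
  have "(G has_field_derivative 0) (at z within UNIV)" for z
  proof -
    have "((\<lambda>z. S (Suc n) (z + of_nat (Suc n))) has_field_derivative (of_nat (Suc n) * S n (z + of_nat (Suc n)))) (at z)"
      using DERIV_chain2[OF S_deriv DERIV_add[OF DERIV_ident DERIV_const]] by simp
    from DERIV_diff[OF T_deriv[of n z] this]
    show ?thesis unfolding G_def[abs_def] using Suc.IH[of "z+1"] by (simp add: algebra_simps)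
  qed
  then obtain c where c: "\<And>z. G z = c"
    using has_field_derivative_zero_constant[of UNIV G] by auto
  have "G (- of_nat (Suc n)) = 0"
    unfolding G_def using T_at[of "Suc n"] by (simp add: S_def)
  then have "G z = 0" using c by metis
  then show ?case unfolding G_def by simp
qed

theorem proposition5:
  fixes n :: nat and z :: complex
  shows "T_poly n z = exp (z + of_nat n) * inc_Gamma_nat n (z + of_nat n)"
  unfolding inc_Gamma_S T_S mult.assoc[symmetric] exp_minus_inverse by simp

end
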